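(* Let $\mu>0$, $\sigma\ge0$ and $r=\sigma/\mu$. Let $A$ be the log-lottery $P^{\log}_{\mu,\sigma}$ (a single-item mechanism posting a random price). Then for every $F\in\mathbb{F}_{\mu,\sigma}$, \[\frac{\mathrm{OPT}(F)}{\mathrm{REV}(A;F)}\le \rho(r),\] where $\rho(r)$ is the unique positive solution $\rho$ of $\frac{1}{\rho^2}\left(2e^{\rho-1}-1\right)=r^2+1$. In particular the robust approximation ratio satisfies $\mathrm{APX}(\mu,\sigma)\le\rho(r)$.
   Context: A nonnegative real random variable is $(\mu,\sigma)$-distributed if its expectation is $\mu$ and its standard deviation is at most $\sigma$; $\mathbb{F}_{\mu,\sigma}$ is the class of such distributions. Single item, single buyer with value $X\sim F$. A (possibly randomized) truthful mechanism is identified with a probability distribution $A$ over prices $p\ge0$: a price $p\sim A$ is drawn and the buyer buys iff $X\ge p$. $\mathrm{REV}(p;F)=p\Pr[X\ge p]$, $\mathrm{REV}(A;F)=\mathbb{E}_{p\sim A}[\mathrm{REV}(p;F)]$, $\mathrm{OPT}(F)=\sup_{p\ge0}\mathrm{REV}(p;F)$, and $\mathrm{APX}(\mu,\sigma)=\inf_A\sup_{F\in\mathbb{F}_{\mu,\sigma}}\mathrm{OPT}(F)/\mathrm{REV}(A;F)$ (ratios with zero denominator are $+\infty$). The log-lottery $P^{\log}_{\mu,\sigma}$ is the random price supported on $[\pi_1,\pi_2]$ with cdf $x\mapsto\frac{\pi_2\ln(x/\pi_1)-(x-\pi_1)}{\pi_2\ln(\pi_2/\pi_1)-(\pi_2-\pi_1)}$,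 where $0<\pi_1\le\pi_2$ are the unique solutions of $\pi_1(1+\ln(\pi_2/\pi_1))=\mu$ and $\pi_1(2\pi_2-\pi_1)=\mu^2+\sigma^2$ (when $\sigma=0$, $\pi_1=\pi_2=\mu$ and it is the deterministic price $\mu$). *)

theory Defs
  imports "HOL-Probability.Probability"
begin

definition mu_sigma_dist :: "real \<Rightarrow> real \<Rightarrow> real measure \<Rightarrow> bool" where
  "mu_sigma_dist \<mu> \<sigma> F \<longleftrightarrow>
     prob_space F \<and> sets F = sets borel \<and> (AE x in F. 0 \<le> x) \<and>
     integrable F (\<lambda>x. x) \<and> integrable F (\<lambda>x. x\<^sup>2) \<and>
     (\<integral>x. x \<partial>F) = \<mu> \<and> sqrt (\<integral>x. (x - \<mu>)\<^sup>2 \<partial>F) \<le> \<sigma>"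

definition REV_price :: "real \<Rightarrow> real measure \<Rightarrow> real" where
  "REV_price p F = p * measure F {p..}"

definition REV :: "real measure \<Rightarrow> real measure \<Rightarrow> real" where
  "REV A F = (\<integral>p. REV_price p F \<partial>A)"

definition OPT :: "real measure \<Rightarrow> real" where
  "OPT F = (SUP p\<in>{0..}. REV_price p F)"

definition ratio :: "real \<Rightarrow> real \<Rightarrow> ereal" where
  "ratio a b = (if b = 0 then \<infinity> else ereal (a / b))"

text \<open>Mechanisms: probability distributions over nonnegative prices.\<close>
definition price_lottery :: "real measure \<Rightarrow> bool" where
  "price_lottery A \<longleftrightarrow> prob_space A \<and> sets A = sets borel \<and> (AE p in A. 0 \<le> p)"

definition APX :: "real \<Rightarrow> real \<Rightarrow> ereal" where
  "APX \<mu> \<sigma> = (INF A\<in>{A. price_lottery A}.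
                 SUP F\<in>{F. mu_sigma_dist \<mu> \<sigma> F}. ratio (OPT F) (REV A F))"

definition log_pis :: "real \<Rightarrow> real \<Rightarrow> real \<times> real" where
  "log_pis \<mu> \<sigma> = (THE (a, b). 0 < a \<and> a \<le> b \<and> a * (1 + ln (b / a)) = \<mu> \<and>
                                a * (2 * b - a) = \<mu>\<^sup>2 + \<sigma>\<^sup>2)"

text \<open>The cdf of the log-lottery (0 below pi1, 1 from pi2 on; when pi1 = pi2 this is
  the point mass at mu).\<close>
definition log_cdf :: "real \<Rightarrow> real \<Rightarrow> real \<Rightarrow> real" where
  "log_cdf \<mu> \<sigma> x = (let (\<pi>1, \<pi>2) = log_pis \<mu> \<sigma> in
     if x < \<pi>1 then 0
     else if x < \<pi>2 then (\<pi>2 * ln (x / \<pi>1) - (x - \<pi>1)) / (\<pi>2 * ln (\<pi>2 / \<pi>1) - (\<pi>2 - \<pi>1))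
     else 1)"

definition log_lottery :: "real \<Rightarrow> real \<Rightarrow> real measure" where
  "log_lottery \<mu> \<sigma> = interval_measure (log_cdf \<mu> \<sigma>)"

definition rho :: "real \<Rightarrow> real" where
  "rho r = (THE \<rho>. 0 < \<rho> \<and> (2 * exp (\<rho> - 1) - 1) / \<rho>\<^sup>2 = r\<^sup>2 + 1)"

end

theory Submission
  imports Defs "HOL-Real_Asymp.Real_Asymp"
begin
lemma exp_quad_upper:
  fixes u :: real assumes "0 < u" shows "exp (-u) < 1 - u + u^2/2"
proof -
  let ?f = "\<lambda>u::real. exp u * (1 - u + u^2/2)"
  have "?f 0 < ?f u"
  proof (rule DERIV_pos_imp_increasing_open[OF assms])
    fix x :: real assume x: "0 < x" "x < u"
    show "\<exists>y. DERIV ?f x :> y \<and> y > 0"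
      by (rule exI[of _ "exp x * (x^2/2)"]) (use x in \<open>auto intro!: derivative_eq_intros simp: algebra_simps power2_eq_square\<close>)
  qed (intro continuous_intros; simp)
  then have "1 < exp u * (1 - u + u^2/2)" by simp
  then show ?thesis by (simp add: exp_minus field_simps)
qed

lemma h_lt1: fixes x :: real assumes "0 < x" "x < 1" shows "2 * exp (x - 1) - 1 < x^2"
proof -
  have e: "exp (x - 1) < 1 - (1 - x) + (1 - x)^2/2" using exp_quad_upper[of "1 - x"] assms by simp
  have q: "(1 - x)^2 = 1 - 2*x + x^2" by (simp add: power2_eq_square algebra_simps)
  show ?thesis using e unfolding q by (simp add: field_simps)
qed

lemma k2_pos: fixes x :: real assumes "1 < x" shows "0 < exp (x - 1) * (x - 2) + 1"
proof -
  let ?f = "\<lambda>x::real. exp (x - 1) * (x - 2) + 1"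
  have "?f 1 < ?f x"
  proof (rule DERIV_pos_imp_increasing_open[OF assms])
    fix y :: real assume y: "1 < y" "y < x"
    show "\<exists>z. DERIV ?f y :> z \<and> z > 0"
      by (rule exI[of _ "exp (y - 1) * (y - 1)"]) (use y in \<open>auto intro!: derivative_eq_intros simp: algebra_simps\<close>)
  qed (intro continuous_intros)
  then show ?thesis by simp
qed

definition hh :: "real \<Rightarrow> real" where "hh x = (2 * exp (x - 1) - 1) / x^2"

lemma hh_mono: fixes x y :: real assumes "1 \<le> x" "x < y" shows "hh x < hh y"
  unfolding hh_def
proof (rule DERIV_pos_imp_increasing_open[OF assms(2)])
  fix z :: real assume z: "x < z" "z < y"
  have k: "0 < exp (z - 1) * (z - 2) + 1" using k2_pos z assms by simp
  have d: "DERIV (\<lambda>x. 2 * exp (x - 1) - 1) z :> 2 * exp (z - 1)"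
    by (auto intro!: derivative_eq_intros)
  have d2: "DERIV (\<lambda>x. x^2) z :> 2 * z" by (auto intro!: derivative_eq_intros)
  have D: "DERIV (\<lambda>x. (2 * exp (x - 1) - 1) / x^2) z :>
      (2 * exp (z - 1) * z^2 - 2 * z * (2 * exp (z - 1) - 1)) / ((z^2) ^ Suc (Suc 0))"
    by (rule DERIV_quotient[OF d d2]) (use z assms in simp)
  have num: "2 * exp (z - 1) * z^2 - 2 * z * (2 * exp (z - 1) - 1) = 2 * z * (exp (z - 1) * (z - 2) + 1)"
    by (simp add: algebra_simps power2_eq_square)
  have "0 < 2 * z * (exp (z - 1) * (z - 2) + 1)" using k z assms by simp
  then have "0 < (2 * exp (z - 1) * z^2 - 2 * z * (2 * exp (z - 1) - 1)) / ((z^2) ^ Suc (Suc 0))"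
    unfolding num using z assms by simp
  then show "\<exists>d. DERIV (\<lambda>x. (2 * exp (x - 1) - 1) / x^2) z :> d \<and> d > 0" using D by blast
next
  show "continuous_on {x..y} (\<lambda>x. (2 * exp (x - 1) - 1) / x\<^sup>2)"
    using assms by (intro continuous_intros) auto
qed

lemma hh_ge1: fixes x :: real assumes "0 < x" "1 \<le> hh x" shows "1 \<le> x"
proof (rule ccontr)
  assume "\<not> 1 \<le> x"
  then have "2 * exp (x - 1) - 1 < x^2" using h_lt1 assms by simp
  then have "hh x < 1" using assms by (simp add: hh_def)
  then show False using assms by simp
qed

lemma hh_ex1: fixes c :: real assumes "1 \<le> c" shows "\<exists>!x. 0 < x \<and> hh x = c"
proof -
  have "filterlim hh at_top at_top" unfolding hh_def by real_asymp
  then have "eventually (\<lambda>x. c \<le> hh x) at_top" by (simp add: filterlim_at_top)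
  then obtain M where M: "\<And>x. M \<le> x \<Longrightarrow> c \<le> hh x" by (auto simp: eventually_at_top_linorder)
  define N where "N = max 1 M"
  have "\<exists>x. 1 \<le> x \<and> x \<le> N \<and> hh x = c"
  proof (rule IVT')
    show "hh 1 \<le> c" using assms by (simp add: hh_def)
    show "c \<le> hh N" using M N_def by simp
    show "1 \<le> N" by (simp add: N_def)
    show "continuous_on {1..N} hh" unfolding hh_def by (intro continuous_intros) auto
  qed
  then obtain x where x: "1 \<le> x" "hh x = c" by auto
  show ?thesis
  proof (rule ex1I[of _ x])
    show "0 < x \<and> hh x = c" using x by simp
    fix y assume y: "0 < y \<and> hh y = c"
    then have "1 \<le> y" using hh_ge1 assms by auto
    then show "y = x" using x y hh_mono by (metis less_irrefl linorder_neqE_linordered_idom)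
  qed
qed

lemma rho_eq: fixes r :: real shows "0 < rho r \<and> hh (rho r) = r^2 + 1"
  unfolding rho_def hh_def[symmetric] by (rule theI') (rule hh_ex1, simp)

lemma rho_ge1: "1 \<le> rho r" using rho_eq[of r] hh_ge1 by fastforce

lemma hh_rho_unique: assumes "0 < x" "hh x = r^2 + 1" shows "x = rho r"
  using hh_ex1[of "r^2+1"] rho_eq[of r] assms by auto

lemma log_pis_eq:
  fixes \<mu> \<sigma> :: real
  assumes "0 < \<mu>" "0 \<le> \<sigma>"
  defines "\<rho> \<equiv> rho (\<sigma> / \<mu>)"
  shows "log_pis \<mu> \<sigma> = (\<mu> / \<rho>, \<mu> / \<rho> * exp (\<rho> - 1))"
proof -
  have r1: "1 \<le> \<rho>" unfolding \<rho>_def by (rule rho_ge1)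
  have hr: "hh \<rho> = (\<sigma>/\<mu>)^2 + 1" unfolding \<rho>_def using rho_eq by blast
  let ?P = "\<lambda>(a, b). 0 < a \<and> a \<le> b \<and> a * (1 + ln (b / a)) = \<mu> \<and> a * (2 * b - a) = \<mu>\<^sup>2 + \<sigma>\<^sup>2"
  show ?thesis unfolding log_pis_def
  proof (rule the_equality)
    have e1: "1 \<le> exp (\<rho> - 1)" using r1 by simp
    have eq: "a * (2 * b - a) = \<mu>\<^sup>2 + \<sigma>\<^sup>2" if "a = \<mu> / \<rho>" "b = \<mu> / \<rho> * exp (\<rho> - 1)" for a b
    proof -
      have "a * (2 * b - a) = \<mu>^2 * ((2 * exp (\<rho> - 1) - 1) / \<rho>^2)"
        unfolding that using r1 by (simp add: field_simps power2_eq_square)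
      also have "\<dots> = \<mu>^2 * ((\<sigma>/\<mu>)^2 + 1)" using hr by (simp add: hh_def)
      also have "\<dots> = \<mu>\<^sup>2 + \<sigma>\<^sup>2" using assms by (simp add: field_simps power2_eq_square)
      finally show ?thesis .
    qed
    show "?P (\<mu> / \<rho>, \<mu> / \<rho> * exp (\<rho> - 1))"
      using eq[OF refl refl] assms r1 e1 by (auto simp: field_simps)
  next
    fix x assume Px: "?P x"
    obtain a b where x: "x = (a, b)" by (cases x)
    have a: "0 < a" "a \<le> b" "a * (1 + ln (b / a)) = \<mu>" "a * (2 * b - a) = \<mu>\<^sup>2 + \<sigma>\<^sup>2"
      using Px x by auto
    define \<rho>' where "\<rho>' = 1 + ln (b / a)"
    have ba: "1 \<le> b / a" using a by simp
    have r1': "1 \<le> \<rho>'" unfolding \<rho>'_def using ba by simp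
    have aeq: "a = \<mu> / \<rho>'" using a r1' unfolding \<rho>'_def[symmetric] by (simp add: field_simps)
    have beq: "b = a * exp (\<rho>' - 1)" unfolding \<rho>'_def using a ba by simp
    have "hh \<rho>' = (\<sigma>/\<mu>)^2 + 1"
    proof -
      have "\<mu>^2 * hh \<rho>' = a * (2 * b - a)"
      proof -
        have mu: "\<mu> = \<rho>' * a" using aeq r1' by simp
        show ?thesis unfolding hh_def mu using r1' a(1) by (simp add: beq field_simps power2_eq_square)
      qed
      then have "\<mu>^2 * hh \<rho>' = \<mu>^2 * ((\<sigma>/\<mu>)^2 + 1)"
        using a assms by (simp add: field_simps power2_eq_square)
      then show ?thesis using assms by simp
    qed
    then have "\<rho>' = \<rho>" unfolding \<rho>_def using r1' by (intro hh_rho_unique) auto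
    then show "x = (\<mu> / \<rho>, \<mu> / \<rho> * exp (\<rho> - 1))" using x aeq beq by simp
  qed
qed

lemma interval_measure_cdf:
  assumes "real_distribution N"
  shows "interval_measure (cdf N) = N"
proof -
  interpret real_distribution N by fact
  have mono: "\<And>x y. x \<le> y \<Longrightarrow> cdf N x \<le> cdf N y" by (rule cdf_nondecreasing)
  have rc: "\<And>a. continuous (at_right a) (cdf N)" by (rule cdf_is_right_cont)
  have rd: "real_distribution (interval_measure (cdf N))"
    by (rule real_distribution_interval_measure[OF mono rc cdf_lim_at_bot cdf_lim_at_top_prob])
  have "cdf (interval_measure (cdf N)) = cdf N"
    by (rule cdf_interval_measure[OF mono rc cdf_lim_at_bot])
  then show ?thesis using cdf_unique[OF rd assms] by simp
qed

lemma msd_basic: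
  assumes "mu_sigma_dist \<mu> \<sigma> F"
  shows "prob_space F" "sets F = sets borel" "space F = UNIV" "AE x in F. 0 \<le> x"
    "integrable F (\<lambda>x. x)" "integrable F (\<lambda>x. x^2)" "(\<integral>x. x \<partial>F) = \<mu>"
  using assms unfolding mu_sigma_dist_def by (auto dest: sets_eq_imp_space_eq)

lemma msd_second_moment:
  assumes "mu_sigma_dist \<mu> \<sigma> F"
  shows "(\<integral>x. x^2 \<partial>F) \<le> \<mu>^2 + \<sigma>^2"
proof -
  note b = msd_basic[OF assms]
  interpret prob_space F by (rule b(1))
  have v: "(\<integral>x. (x - \<mu>)^2 \<partial>F) = (\<integral>x. x^2 \<partial>F) - \<mu>^2"
    using variance_eq[of "\<lambda>x. x"] b by simp
  have s: "sqrt (\<integral>x. (x - \<mu>)^2 \<partial>F) \<le> \<sigma>" using assms unfolding mu_sigma_dist_def by simp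
  have nn: "0 \<le> (\<integral>x. (x - \<mu>)^2 \<partial>F)" by (rule integral_nonneg_AE) simp
  have "(\<integral>x. (x - \<mu>)^2 \<partial>F) = (sqrt (\<integral>x. (x - \<mu>)^2 \<partial>F))^2" using nn by simp
  also have "\<dots> \<le> \<sigma>^2" using s by (intro power_mono) auto
  finally show ?thesis using v by simp
qed

lemma REV_price_le:
  assumes "mu_sigma_dist \<mu> \<sigma> F" "0 \<le> p"
  shows "REV_price p F \<le> \<mu>"
proof -
  note b = msd_basic[OF assms(1)]
  interpret prob_space F by (rule b(1))
  have "REV_price p F = (\<integral>x. p * indicator {p..} x \<partial>F)"
    unfolding REV_price_def using b by simp
  also have "\<dots> \<le> (\<integral>x. x \<partial>F)"
  proof (rule integral_mono_AE)
    show "integrable F (\<lambda>x. p * indicator {p..} x)"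
      using b by (intro integrable_mult_right) (simp add: integrable_indicator_iff emeasure_finite less_top[symmetric])
    show "integrable F (\<lambda>x. x)" by (rule b(5))
    show "AE x in F. p * indicator {p..} x \<le> x"
      using b(4) by eventually_elim (use assms(2) in \<open>auto split: split_indicator\<close>)
  qed
  finally show ?thesis using b by simp
qed

lemma OPT_le:
  assumes "mu_sigma_dist \<mu> \<sigma> F"
  shows "OPT F \<le> \<mu>"
  unfolding OPT_def by (rule cSUP_least) (auto intro: REV_price_le[OF assms])

lemma REV_price_measurable:
  assumes "prob_space F" "sets F = sets borel"
  shows "(\<lambda>p. REV_price p F) \<in> borel_measurable borel"
proof -
  interpret prob_space F by fact
  have "mono (\<lambda>p. - measure F {p..})"
  proof (rule monoI)
    fix x y :: real assume "x \<le> y"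
    then have "measure F {y..} \<le> measure F {x..}"
      by (intro finite_measure_mono) (use assms in auto)
    then show "- measure F {x..} \<le> - measure F {y..}" by simp
  qed
  then have "(\<lambda>p. - measure F {p..}) \<in> borel_measurable borel" by (rule borel_measurable_mono)
  then have "(\<lambda>p. - (- measure F {p..})) \<in> borel_measurable borel" by measurable
  then show ?thesis unfolding REV_price_def by simp
qed

definition Dc :: "real \<Rightarrow> real \<Rightarrow> real" where "Dc p1 p2 = p2 * ln (p2 / p1) - (p2 - p1)"
definition gd :: "real \<Rightarrow> real \<Rightarrow> real \<Rightarrow> real" where
  "gd p1 p2 p = indicator {p1..p2} p * ((p2 / p - 1) / Dc p1 p2)"
definition C0 :: "real \<Rightarrow> real \<Rightarrow> real \<Rightarrow> real" where
  "C0 p1 p2 y = (p2 * ln (y / p1) - (y - p1)) / Dc p1 p2"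
definition Qf :: "real \<Rightarrow> real \<Rightarrow> real \<Rightarrow> real" where
  "Qf p1 p2 y = (p2 * y - y^2 / 2 - p2 * p1 + p1^2 / 2) / Dc p1 p2"

lemma gd_measurable[measurable]: "gd p1 p2 \<in> borel_measurable borel"
  unfolding gd_def by measurable

lemma Dc_pos: assumes "0 < p1" "p1 < p2" shows "0 < Dc p1 p2"
proof -
  define t where "t = p2 / p1"
  have t1: "1 < t" using assms by (simp add: t_def)
  have "0 < exp ((1 + ln t) - 1) * ((1 + ln t) - 2) + 1" using t1 by (intro k2_pos) simp
  then have "0 < t * (ln t - 1) + 1" using t1 by simp
  then have "0 < p1 * (t * (ln t - 1) + 1)" using assms by simp
  also have "p1 * (t * (ln t - 1) + 1) = Dc p1 p2" unfolding Dc_def t_def using assms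
    by (simp add: field_simps)
  finally show ?thesis .
qed

lemma FTC1:
  assumes "0 < p1" "p1 \<le> m" "0 < Dc p1 p2"
  shows "(\<integral>p. indicator {p1..m} p * ((p2 / p - 1) / Dc p1 p2) \<partial>lborel) = C0 p1 p2 m"
proof -
  have "(\<integral>p. indicator {p1..m} p *\<^sub>R ((p2 / p - 1) / Dc p1 p2) \<partial>lborel) = C0 p1 p2 m - C0 p1 p2 p1"
  proof (rule integral_FTC_atLeastAtMost[OF assms(2)])
    fix x assume x: "p1 \<le> x" "x \<le> m"
    have "(C0 p1 p2 has_real_derivative ((p2 / x - 1) / Dc p1 p2)) (at x)"
      unfolding C0_def using x assms
      by (auto intro!: derivative_eq_intros simp: field_simps)
    then show "(C0 p1 p2 has_vector_derivative ((p2 / x - 1) / Dc p1 p2)) (at x within {p1..m})"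
      by (simp add: has_real_derivative_iff_has_vector_derivative[symmetric] has_field_derivative_at_within)
  next
    show "continuous_on {p1..m} (\<lambda>p. (p2 / p - 1) / Dc p1 p2)"
      using assms by (intro continuous_intros) auto
  qed
  then show ?thesis by (simp add: C0_def)
qed

lemma FTC2:
  assumes "p1 \<le> m" "0 < Dc p1 p2"
  shows "(\<integral>p. indicator {p1..m} p * ((p2 - p) / Dc p1 p2) \<partial>lborel) = Qf p1 p2 m"
proof -
  have "(\<integral>p. indicator {p1..m} p *\<^sub>R ((p2 - p) / Dc p1 p2) \<partial>lborel) = Qf p1 p2 m - Qf p1 p2 p1"
  proof (rule integral_FTC_atLeastAtMost[OF assms(1)])
    fix x assume x: "p1 \<le> x" "x \<le> m"
    have "(Qf p1 p2 has_real_derivative ((p2 - x) / Dc p1 p2)) (at x)"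
      unfolding Qf_def using assms
      by (auto intro!: derivative_eq_intros simp: field_simps)
    then show "(Qf p1 p2 has_vector_derivative ((p2 - x) / Dc p1 p2)) (at x within {p1..m})"
      by (simp add: has_real_derivative_iff_has_vector_derivative[symmetric] has_field_derivative_at_within)
  next
    show "continuous_on {p1..m} (\<lambda>p. (p2 - p) / Dc p1 p2)"
      using assms by (intro continuous_intros) auto
  qed
  then show ?thesis by (simp add: Qf_def power2_eq_square)
qed

lemma Qf_mono:
  assumes "0 < Dc p1 p2"
  shows "a \<le> b \<Longrightarrow> b \<le> p2 \<Longrightarrow> Qf p1 p2 a \<le> Qf p1 p2 b"
    and "p2 \<le> b \<Longrightarrow> b \<le> a \<Longrightarrow> Qf p1 p2 a \<le> Qf p1 p2 b"
proof -
  have eq: "Qf p1 p2 b - Qf p1 p2 a = (b - a) * (p2 - (a + b) / 2) / Dc p1 p2"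
    unfolding Qf_def using assms by (simp add: field_simps power2_eq_square)
  show "a \<le> b \<Longrightarrow> b \<le> p2 \<Longrightarrow> Qf p1 p2 a \<le> Qf p1 p2 b"
  proof -
    assume "a \<le> b" "b \<le> p2"
    then have "0 \<le> (b - a) * (p2 - (a + b) / 2) / Dc p1 p2" using assms by (intro divide_nonneg_pos mult_nonneg_nonneg) auto
    then show ?thesis using eq by simp
  qed
  show "p2 \<le> b \<Longrightarrow> b \<le> a \<Longrightarrow> Qf p1 p2 a \<le> Qf p1 p2 b"
  proof -
    assume "p2 \<le> b" "b \<le> a"
    then have "0 \<le> (a - b) * ((a + b) / 2 - p2) / Dc p1 p2" using assms by (intro divide_nonneg_pos mult_nonneg_nonneg) auto
    also have "(a - b) * ((a + b) / 2 - p2) = (b - a) * (p2 - (a + b) / 2)" by (simp add: field_simps)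
    finally show ?thesis using eq by simp
  qed
qed

lemma Qf_clip:
  assumes "0 < Dc p1 p2" "p1 \<le> p2"
  shows "Qf p1 p2 y \<le> Qf p1 p2 (max p1 (min y p2))"
  using Qf_mono[OF assms(1)] assms(2)
  by (cases "y \<le> p1"; cases "y \<le> p2") (auto simp: max_def min_def)

locale pis =
  fixes p1 p2 :: real
  assumes p1: "0 < p1" and p12: "p1 < p2"
begin

lemma Dpos: "0 < Dc p1 p2" using Dc_pos p1 p12 by simp

lemma gd_nonneg: "0 \<le> gd p1 p2 p"
  unfolding gd_def using Dpos p1 by (auto split: split_indicator intro!: divide_nonneg_pos simp: field_simps)

lemma gd_integrable: "integrable lborel (gd p1 p2)"
proof -
  have "integrable lborel (\<lambda>p. ((p2 / p - 1) / Dc p1 p2) * indicator {p1..p2} p)"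
    using p1 Dpos by (intro borel_integrable_atLeastAtMost) (auto intro!: continuous_intros)
  then show ?thesis by (simp add: gd_def[abs_def] mult.commute)
qed

lemma C0_p2: "C0 p1 p2 p2 = 1" unfolding C0_def Dc_def using Dpos by (simp add: Dc_def)

lemma int_gd_Iic:
  "(\<integral>p. gd p1 p2 p * indicator {..x} p \<partial>lborel) = (if x < p1 then 0 else if x < p2 then C0 p1 p2 x else 1)"
proof (cases "x < p1")
  case True
  have "(\<lambda>p. gd p1 p2 p * indicator {..x} p) = (\<lambda>_. 0)" using True unfolding gd_def by (auto split: split_indicator)
  then show ?thesis using True by simp
next
  case False
  note F = this
  show ?thesis
  proof (cases "x < p2")
    case True
    have "\<And>p. gd p1 p2 p * indicator {..x} p = indicator {p1..x} p * ((p2 / p - 1) / Dc p1 p2)"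
      using True unfolding gd_def by (auto split: split_indicator)
    then show ?thesis using True F FTC1[of p1 x p2] p1 Dpos by simp
  next
    case False
    have "\<And>p. gd p1 p2 p * indicator {..x} p = indicator {p1..p2} p * ((p2 / p - 1) / Dc p1 p2)"
      using False unfolding gd_def by (auto split: split_indicator)
    then show ?thesis using False F FTC1[of p1 p2 p2] p1 p12 Dpos C0_p2 by simp
  qed
qed

definition "N = density lborel (gd p1 p2)"

lemma int_gd: "(\<integral>p. gd p1 p2 p \<partial>lborel) = 1"
proof -
  have "(\<lambda>p. gd p1 p2 p * indicator {..p2} p) = gd p1 p2" by (auto simp: gd_def split: split_indicator)
  then show ?thesis using int_gd_Iic[of p2] p12 by simp
qed

lemma N_prob: "prob_space N"
proof
  have "emeasure N (space N) = (\<integral>\<^sup>+ x. ennreal (gd p1 p2 x) \<partial>lborel)"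
    unfolding N_def by (simp add: emeasure_density)
  also have "\<dots> = ennreal (\<integral>p. gd p1 p2 p \<partial>lborel)"
    by (rule nn_integral_eq_integral[OF gd_integrable]) (simp add: gd_nonneg)
  finally show "emeasure N (space N) = 1" using int_gd by simp
qed

lemma N_sets: "sets N = sets borel" unfolding N_def by simp

lemma N_real_distribution: "real_distribution N"
  unfolding real_distribution_def real_distribution_axioms_def using N_prob N_sets by simp

lemma N_cdf: "cdf N x = (if x < p1 then 0 else if x < p2 then C0 p1 p2 x else 1)"
proof -
  have sp: "space N = UNIV" unfolding N_def by simp
  have "cdf N x = (\<integral>p. indicator {..x} p \<partial>N)" unfolding cdf_def using sp by simp
  also have "\<dots> = (\<integral>p. gd p1 p2 p * indicator {..x} p \<partial>lborel)"
    unfolding N_def by (subst integral_density) (auto simp: gd_nonneg)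
  finally show ?thesis using int_gd_Iic by simp
qed

lemma N_AE_nonneg: "AE p in N. 0 \<le> p"
  unfolding N_def
  by (subst AE_density) (use p1 in \<open>auto simp: gd_def split: split_indicator\<close>)

end

context pis begin

lemma REV_N_ge:
  assumes msd: "mu_sigma_dist \<mu> \<sigma> F"
  shows "(p2 * \<mu> - (\<mu>^2 + \<sigma>^2) / 2 - p2 * p1 + p1^2 / 2) / Dc p1 p2 \<le> REV N F"
proof -
  note b = msd_basic[OF msd]
  interpret F: prob_space F by (rule b(1))
  interpret pair_sigma_finite lborel F
    by (simp add: pair_sigma_finite_def lborel.sigma_finite_measure_axioms prob_space_imp_sigma_finite b(1))
  define f where "f p x = gd p1 p2 p * p * indicator {p..} x" for p x :: real
  have fnn: "0 \<le> f p x" for p x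
  proof -
    have "0 \<le> gd p1 p2 p * p"
    proof (cases "p1 \<le> p")
      case True then show ?thesis using gd_nonneg[of p] p1 by simp
    next
      case False then show ?thesis by (simp add: gd_def)
    qed
    then show ?thesis unfolding f_def by simp
  qed
  have [measurable]: "(\<lambda>p. REV_price p F) \<in> borel_measurable borel"
    by (rule REV_price_measurable[OF b(1) b(2)])
  have S1: "REV N F = (\<integral>p. gd p1 p2 p * REV_price p F \<partial>lborel)"
    unfolding REV_def N_def by (subst integral_density) (auto simp: gd_nonneg)
  have S2: "gd p1 p2 p * REV_price p F = (\<integral>x. f p x \<partial>F)" for p
    unfolding f_def REV_price_def using b by simp
  have sndm[measurable]: "snd \<in> borel_measurable (lborel \<Otimes>\<^sub>M F)"
  proof -
    have s: "snd \<in> measurable (lborel \<Otimes>\<^sub>M F) F" by (rule measurable_snd)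
    have e: "measurable (lborel \<Otimes>\<^sub>M F) F = measurable (lborel \<Otimes>\<^sub>M F) borel"
      by (rule measurable_cong_sets[OF refl b(2)])
    show ?thesis using s e by blast
  qed
  have [measurable]: "Measurable.pred (lborel \<Otimes>\<^sub>M F) (\<lambda>w. snd w \<in> {fst w..})"
    by simp measurable
  have meas: "case_prod f \<in> borel_measurable (lborel \<Otimes>\<^sub>M F)"
    unfolding f_def[abs_def] by measurable
  have int: "integrable (lborel \<Otimes>\<^sub>M F) (case_prod f)"
  proof (rule Fubini_integrable[OF meas])
    have eq: "(\<integral>x. norm (f p x) \<partial>F) = gd p1 p2 p * REV_price p F" for p
      using S2[of p] fnn by simp
    have i1: "integrable lborel (\<lambda>p. gd p1 p2 p * p)"
    proof -
      have "integrable lborel (\<lambda>p. (((p2 / p - 1) / Dc p1 p2) * p) * indicator {p1..p2} p)"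
        using p1 Dpos by (intro borel_integrable_atLeastAtMost) (auto intro!: continuous_intros)
      then show ?thesis by (simp add: gd_def[abs_def] mult.commute mult.left_commute)
    qed
    show "integrable lborel (\<lambda>p. \<integral>x. norm (case_prod f (p, x)) \<partial>F)"
      unfolding case_prod_conv eq
    proof (rule Bochner_Integration.integrable_bound[OF i1])
      show "(\<lambda>p. gd p1 p2 p * REV_price p F) \<in> borel_measurable lborel" by measurable
      show "AE p in lborel. norm (gd p1 p2 p * REV_price p F) \<le> norm (gd p1 p2 p * p)"
      proof (rule AE_I2)
        fix p
        show "norm (gd p1 p2 p * REV_price p F) \<le> norm (gd p1 p2 p * p)"
        proof (cases "gd p1 p2 p = 0")
          case False
          then have pp: "p1 \<le> p" unfolding gd_def by (cases "p1 \<le> p") auto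
          have "REV_price p F \<le> p" unfolding REV_price_def using pp p1 F.prob_le_1
            by (intro mult_left_le) auto
          moreover have "0 \<le> REV_price p F" unfolding REV_price_def using pp p1 by simp
          ultimately show ?thesis using gd_nonneg[of p] pp p1
            by (simp add: abs_mult mult_left_mono)
        qed simp
      qed
    qed
    show "AE p in lborel. integrable F (\<lambda>x. case_prod f (p, x))"
      unfolding case_prod_conv
    proof (rule AE_I2)
      fix p
      show "integrable F (f p)" unfolding f_def[abs_def]
        using b by (intro integrable_mult_right) (simp add: integrable_indicator_iff F.emeasure_finite less_top[symmetric])
    qed
  qed
  have S3: "(\<integral>x. (\<integral>p. f p x \<partial>lborel) \<partial>F) = (\<integral>p. (\<integral>x. f p x \<partial>F) \<partial>lborel)"
    by (rule Fubini_integral[OF int])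
  have S4: "(\<integral>p. f p x \<partial>lborel) = Qf p1 p2 (max p1 (min x p2))" for x
  proof (cases "x < p1")
    case True
    have "(\<lambda>p. f p x) = (\<lambda>_. 0)" using True unfolding f_def gd_def by (auto split: split_indicator)
    moreover have "Qf p1 p2 p1 = 0" unfolding Qf_def by (simp add: power2_eq_square)
    ultimately show ?thesis using True by simp
  next
    case False
    have "(\<lambda>p. f p x) = (\<lambda>p. indicator {p1..min x p2} p * ((p2 - p) / Dc p1 p2))"
      using False p1 unfolding f_def gd_def by (auto split: split_indicator simp: field_simps)
    then show ?thesis using False p12 FTC2[of p1 "min x p2" p2] Dpos by simp
  qed
  have REVeq: "REV N F = (\<integral>x. Qf p1 p2 (max p1 (min x p2)) \<partial>F)"
    unfolding S1 S2 S3[symmetric] S4 ..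
  define D where "D = Dc p1 p2"
  have D0: "0 < D" using Dpos by (simp add: D_def)
  have [measurable_cong]: "sets F = sets borel" by (rule b(2))
  define c where "c = (p1^2/2 - p2*p1) / D"
  have Qeq: "Qf p1 p2 x = (p2 / D) * x - (1 / (2 * D)) * x^2 + c" for x
    unfolding Qf_def c_def D_def[symmetric] using D0 by (simp add: field_simps)
  have i1: "integrable F (\<lambda>x. (p2 / D) * x)" by (intro integrable_mult_right b(5))
  have i2: "integrable F (\<lambda>x. (1 / (2 * D)) * x^2)" by (intro integrable_mult_right b(6))
  have iQ: "integrable F (\<lambda>x. Qf p1 p2 x)"
    unfolding Qeq by (intro Bochner_Integration.integrable_add Bochner_Integration.integrable_diff i1 i2 F.integrable_const)
  have intQ: "(\<integral>x. Qf p1 p2 x \<partial>F) = (p2 / D) * \<mu> - (1 / (2 * D)) * (\<integral>x. x^2 \<partial>F) + c"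
    unfolding Qeq using i1 i2 b(7)
    by (simp add: Bochner_Integration.integral_add Bochner_Integration.integral_diff Bochner_Integration.integrable_diff F.prob_space)
  have bnd: "norm (Qf p1 p2 (max p1 (min x p2))) \<le> Qf p1 p2 p2" for x
  proof -
    have "Qf p1 p2 p1 \<le> Qf p1 p2 (max p1 (min x p2))" using Qf_mono(1)[OF Dpos] p12 by simp
    moreover have "Qf p1 p2 (max p1 (min x p2)) \<le> Qf p1 p2 p2" using Qf_mono(1)[OF Dpos] p12 by simp
    moreover have "Qf p1 p2 p1 = 0" unfolding Qf_def by (simp add: power2_eq_square)
    ultimately show ?thesis by simp
  qed
  have iC: "integrable F (\<lambda>x. Qf p1 p2 (max p1 (min x p2)))"
    by (rule F.integrable_const_bound[where B="Qf p1 p2 p2"]) (use bnd in \<open>auto simp: Qf_def\<close>)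
  have "(\<integral>x. Qf p1 p2 x \<partial>F) \<le> (\<integral>x. Qf p1 p2 (max p1 (min x p2)) \<partial>F)"
    by (rule integral_mono[OF iQ iC]) (use Qf_clip[OF Dpos] p12 in auto)
  then have le1: "(p2 / D) * \<mu> - (1 / (2 * D)) * (\<integral>x. x^2 \<partial>F) + c \<le> REV N F"
    using intQ REVeq by simp
  have "(p2 / D) * \<mu> - (1 / (2 * D)) * (\<mu>^2 + \<sigma>^2) + c \<le> (p2 / D) * \<mu> - (1 / (2 * D)) * (\<integral>x. x^2 \<partial>F) + c"
    using msd_second_moment[OF msd] D0 by (simp add: divide_right_mono)
  moreover have "(p2 / D) * \<mu> - (1 / (2 * D)) * (\<mu>^2 + \<sigma>^2) + c = (p2 * \<mu> - (\<mu>^2 + \<sigma>^2) / 2 - p2 * p1 + p1^2 / 2) / Dc p1 p2"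
    unfolding c_def D_def[symmetric] using D0 by (simp add: field_simps)
  ultimately show ?thesis using le1 by linarith
qed

end

lemma log_pis_props:
  fixes \<mu> \<sigma> :: real
  assumes "0 < \<mu>" "0 \<le> \<sigma>"
  defines "\<rho> \<equiv> rho (\<sigma> / \<mu>)"
  shows "\<mu> / \<rho> * (1 + ln ((\<mu> / \<rho> * exp (\<rho> - 1)) / (\<mu> / \<rho>))) = \<mu>"
    and "\<mu> / \<rho> * (2 * (\<mu> / \<rho> * exp (\<rho> - 1)) - \<mu> / \<rho>) = \<mu>\<^sup>2 + \<sigma>\<^sup>2"
proof -
  have r1: "1 \<le> \<rho>" unfolding \<rho>_def by (rule rho_ge1)
  have hr: "hh \<rho> = (\<sigma>/\<mu>)^2 + 1" unfolding \<rho>_def using rho_eq by blast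
  show "\<mu> / \<rho> * (1 + ln ((\<mu> / \<rho> * exp (\<rho> - 1)) / (\<mu> / \<rho>))) = \<mu>"
    using r1 assms by simp
  have "\<mu> / \<rho> * (2 * (\<mu> / \<rho> * exp (\<rho> - 1)) - \<mu> / \<rho>) = \<mu>^2 * ((2 * exp (\<rho> - 1) - 1) / \<rho>^2)"
    using r1 by (simp add: field_simps power2_eq_square)
  also have "\<dots> = \<mu>^2 * ((\<sigma>/\<mu>)^2 + 1)" using hr by (simp add: hh_def)
  also have "\<dots> = \<mu>\<^sup>2 + \<sigma>\<^sup>2" using assms by (simp add: field_simps power2_eq_square)
  finally show "\<mu> / \<rho> * (2 * (\<mu> / \<rho> * exp (\<rho> - 1)) - \<mu> / \<rho>) = \<mu>\<^sup>2 + \<sigma>\<^sup>2" .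
qed

lemma ratio_le:
  assumes "OPT F \<le> \<mu>" "0 < \<mu>" "0 < p1" "p1 \<le> R"
  shows "ratio (OPT F) R \<le> ereal (\<mu> / p1)"
proof -
  have "OPT F / R \<le> \<mu> / R" using assms by (intro divide_right_mono) auto
  also have "\<mu> / R \<le> \<mu> / p1" using assms by (intro divide_left_mono) auto
  finally show ?thesis unfolding ratio_def using assms by auto
qed

lemma main_pos:
  fixes \<mu> \<sigma> :: real
  assumes "0 < \<mu>" "0 < \<sigma>"
  shows "(\<forall>F. mu_sigma_dist \<mu> \<sigma> F \<longrightarrow>
            ratio (OPT F) (REV (log_lottery \<mu> \<sigma>) F) \<le> ereal (rho (\<sigma> / \<mu>)))
         \<and> price_lottery (log_lottery \<mu> \<sigma>)"
proof -
  define \<rho> where "\<rho> = rho (\<sigma> / \<mu>)"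
  define p1 where "p1 = \<mu> / \<rho>"
  define p2 where "p2 = \<mu> / \<rho> * exp (\<rho> - 1)"
  have r1: "1 \<le> \<rho>" unfolding \<rho>_def by (rule rho_ge1)
  have "\<rho> \<noteq> 1"
  proof
    assume "\<rho> = 1"
    then have "hh 1 = (\<sigma>/\<mu>)^2 + 1" unfolding \<rho>_def using rho_eq by metis
    then show False using assms by (simp add: hh_def)
  qed
  then have r1': "1 < \<rho>" using r1 by simp
  have pp1: "0 < p1" unfolding p1_def using assms r1 by simp
  have pp12: "p1 < p2"
  proof -
    have ex: "1 < exp (\<rho> - 1)" using r1' by simp
    have "\<mu> / \<rho> * 1 < \<mu> / \<rho> * exp (\<rho> - 1)" by (rule mult_strict_left_mono[OF ex]) (use assms r1 in simp)
    then show ?thesis unfolding p1_def p2_def by simp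
  qed
  interpret pis p1 p2 using pp1 pp12 by unfold_locales
  have lp: "log_pis \<mu> \<sigma> = (p1, p2)" unfolding p1_def p2_def \<rho>_def
    by (rule log_pis_eq) (use assms in auto)
  have e1: "p1 * (1 + ln (p2 / p1)) = \<mu>" and e2: "p1 * (2 * p2 - p1) = \<mu>\<^sup>2 + \<sigma>\<^sup>2"
    unfolding p1_def p2_def \<rho>_def using log_pis_props[of \<mu> \<sigma>] assms by auto
  have cdfeq: "log_cdf \<mu> \<sigma> = cdf N"
    by (rule ext) (simp add: log_cdf_def lp N_cdf C0_def Dc_def)
  have LN: "log_lottery \<mu> \<sigma> = N"
    unfolding log_lottery_def cdfeq by (rule interval_measure_cdf[OF N_real_distribution])
  have val: "(p2 * \<mu> - (\<mu>^2 + \<sigma>^2) / 2 - p2 * p1 + p1^2 / 2) / Dc p1 p2 = p1"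
  proof -
    have "p2 * \<mu> - (\<mu>^2 + \<sigma>^2) / 2 - p2 * p1 + p1^2 / 2 = p1 * Dc p1 p2"
      unfolding e2[symmetric] unfolding e1[symmetric] Dc_def by (simp add: field_simps power2_eq_square)
    then show ?thesis using Dpos by simp
  qed
  have rho_eq': "\<mu> / p1 = rho (\<sigma> / \<mu>)" unfolding p1_def \<rho>_def[symmetric] using assms r1 by simp
  show ?thesis
  proof (intro conjI allI impI)
    fix F assume msd: "mu_sigma_dist \<mu> \<sigma> F"
    have "p1 \<le> REV N F" using REV_N_ge[OF msd] val by simp
    then show "ratio (OPT F) (REV (log_lottery \<mu> \<sigma>) F) \<le> ereal (rho (\<sigma> / \<mu>))"
      unfolding LN rho_eq'[symmetric] using OPT_le[OF msd] assms pp1 by (intro ratio_le) auto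
  next
    show "price_lottery (log_lottery \<mu> \<sigma>)"
      unfolding price_lottery_def LN using N_prob N_sets N_AE_nonneg by simp
  qed
qed

lemma msd_zero_measure:
  assumes msd: "mu_sigma_dist \<mu> 0 F"
  shows "measure F {\<mu>..} = 1"
proof -
  note b = msd_basic[OF msd]
  interpret F: prob_space F by (rule b(1))
  have eqf: "(\<lambda>x. (x - \<mu>)^2) = (\<lambda>x. x^2 + (- 2 * \<mu>) * x + \<mu>^2)"
    by (rule ext) (simp add: power2_eq_square algebra_simps)
  have int: "integrable F (\<lambda>x. (x - \<mu>)^2)"
    unfolding eqf by (intro Bochner_Integration.integrable_add integrable_mult_right b(5) b(6) F.integrable_const)
  have "sqrt (\<integral>x. (x - \<mu>)^2 \<partial>F) \<le> 0" using msd unfolding mu_sigma_dist_def by simp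
  moreover have "0 \<le> (\<integral>x. (x - \<mu>)^2 \<partial>F)" by (rule integral_nonneg_AE) simp
  ultimately have "(\<integral>x. (x - \<mu>)^2 \<partial>F) = 0" by simp
  then have "AE x in F. (x - \<mu>)^2 = 0" using integral_nonneg_eq_0_iff_AE[OF int] by simp
  then have ae: "AE x in F. x = \<mu>" by simp
  have "measure F {\<mu>..} = (\<integral>x. indicator {\<mu>..} x \<partial>F)" using b by simp
  also have "\<dots> = (\<integral>x. 1 \<partial>F)"
  proof (rule integral_cong_AE)
    have [measurable_cong]: "sets F = sets borel" by (rule b(2))
    show "(indicator {\<mu>..} :: real \<Rightarrow> real) \<in> borel_measurable F" by measurable
    show "(\<lambda>_. 1 :: real) \<in> borel_measurable F" by simp
    show "AE x in F. indicator {\<mu>..} x = (1::real)" using ae by eventually_elim auto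
  qed
  finally show ?thesis using F.prob_space by simp
qed

lemma main_zero:
  fixes \<mu> :: real
  assumes "0 < \<mu>"
  shows "(\<forall>F. mu_sigma_dist \<mu> 0 F \<longrightarrow>
            ratio (OPT F) (REV (log_lottery \<mu> 0) F) \<le> ereal (rho (0 / \<mu>)))
         \<and> price_lottery (log_lottery \<mu> 0)"
proof -
  have r0: "rho 0 = 1" using hh_rho_unique[of 1 0] by (simp add: hh_def)
  have lp: "log_pis \<mu> 0 = (\<mu>, \<mu>)" using log_pis_eq[of \<mu> 0] assms r0 by simp
  let ?R = "return borel \<mu>"
  have rd: "real_distribution ?R"
    unfolding real_distribution_def real_distribution_axioms_def by (simp add: prob_space_return)
  have cdfeq: "log_cdf \<mu> 0 = cdf ?R"
    by (rule ext) (simp add: log_cdf_def lp cdf_def measure_return split: split_indicator)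
  have LR: "log_lottery \<mu> 0 = ?R"
    unfolding log_lottery_def cdfeq by (rule interval_measure_cdf[OF rd])
  show ?thesis
  proof (intro conjI allI impI)
    fix F assume msd: "mu_sigma_dist \<mu> 0 F"
    note b = msd_basic[OF msd]
    have "REV ?R F = REV_price \<mu> F"
      unfolding REV_def by (rule integral_return) (auto intro: REV_price_measurable[OF b(1) b(2)])
    also have "\<dots> = \<mu>" unfolding REV_price_def using msd_zero_measure[OF msd] by simp
    finally have "REV ?R F = \<mu>" .
    then show "ratio (OPT F) (REV (log_lottery \<mu> 0) F) \<le> ereal (rho (0 / \<mu>))"
      unfolding LR using ratio_le[of F \<mu> \<mu> \<mu>] OPT_le[OF msd] assms r0 by simp
  next
    show "price_lottery (log_lottery \<mu> 0)"
      unfolding price_lottery_def LR using assms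
      by (auto simp: prob_space_return AE_return)
  qed
qed

theorem theorem2:
  fixes \<mu> \<sigma> :: real
  assumes "0 < \<mu>" and "0 \<le> \<sigma>"
  shows "(\<forall>F. mu_sigma_dist \<mu> \<sigma> F \<longrightarrow>
            ratio (OPT F) (REV (log_lottery \<mu> \<sigma>) F) \<le> ereal (rho (\<sigma> / \<mu>)))
         \<and> APX \<mu> \<sigma> \<le> ereal (rho (\<sigma> / \<mu>))"
proof -
  have M: "(\<forall>F. mu_sigma_dist \<mu> \<sigma> F \<longrightarrow>
            ratio (OPT F) (REV (log_lottery \<mu> \<sigma>) F) \<le> ereal (rho (\<sigma> / \<mu>)))
         \<and> price_lottery (log_lottery \<mu> \<sigma>)"
  proof (cases "\<sigma> = 0")
    case True then show ?thesis using main_zero[OF assms(1)] by simp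
  next
    case False then show ?thesis using main_pos[of \<mu> \<sigma>] assms by simp
  qed
  have "APX \<mu> \<sigma> \<le> ereal (rho (\<sigma> / \<mu>))"
    unfolding APX_def
  proof (rule INF_lower2)
    show "log_lottery \<mu> \<sigma> \<in> {A. price_lottery A}" using M by simp
    show "(SUP F\<in>{F. mu_sigma_dist \<mu> \<sigma> F}. ratio (OPT F) (REV (log_lottery \<mu> \<sigma>) F)) \<le> ereal (rho (\<sigma> / \<mu>))"
      using M by (intro SUP_least) auto
  qed
  then show ?thesis using M by simp
qed

end
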